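(* Let $A$ be a real $n\times n$ matrix acting on $H=\mathbb{R}^n$ (Euclidean inner product $\langle\cdot,\cdot\rangle$, norm $\|\cdot\|$) and let $\lambda$ be a real eigenvalue of $A$. Let $u_0\in\operatorname{Ker}(A-\lambda I)$ with $\|u_0\|=1$ and all components of $u_0$ nonzero, and let $\eta_0\in\mathbb{R}$ satisfy $$\langle |u_0|+\eta_0u_0,\,v\rangle=0\quad\text{for all } v\in\operatorname{Ker}(A^*-\lambda I).$$ Assume moreover the nondegeneracy condition: whenever $c\in\mathbb{R}$ and $w\in\operatorname{Ker}(A-\lambda I)$ satisfy $\langle u_0,w\rangle=0$ and $$Q\big(\Xi(u_0)w+\eta_0 w\big)+c\,Qu_0=0,$$ then $w=0$ and $c=0$. Then there exist a neighborhood $E$ of $0$ in $\mathbb{R}$ and continuous functions $\eta:E\to\mathbb{R}$, $u:E\to H$ with $u(0)=u_0$, $\eta(0)=\eta_0$, such that $$(A-\lambda I)u(\varepsilon)=\varepsilon\big(|u(\varepsilon)|+\eta(\varepsilon)u(\varepsilon)\big),\qquad \|u(\varepsilon)\|=1,\qquad \varepsilon\in E;$$ i.e. $\big(\lambda+\varepsilon(\eta(\varepsilon)+1),\ \lambda+\varepsilon(\eta(\varepsilon)-1)\big)$, $\varepsilon\in E$, describes a part of a Fučík curve of $A$ emanating from $(\lambda,\lambda)$ in the $\alpha\beta$-plane.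
   Context: $A^*$ is the transpose of $A$. $Q$ denotes the orthogonal projection of $\mathbb{R}^n$ onto $\operatorname{Ker}(A^*-\lambda I)$. For $u\in\mathbb{R}^n$, $|u|=[|u_1|,\dots,|u_n|]^t$ and $\Xi(u)=\operatorname{diag}(\operatorname{sgn}u_1,\dots,\operatorname{sgn}u_n)$. The Fučík spectrum of $A$ is the set of $(\alpha,\beta)\in\mathbb{R}^2$ for which $Au=\alpha u^+-\beta u^-$ has a nontrivial solution, where $u_i^+=\max\{u_i,0\}$, $u_i^-=\max\{-u_i,0\}$; with $\alpha=\varepsilon(\eta+1)+\lambda$, $\beta=\varepsilon(\eta-1)+\lambda$ this problem is equivalent to $(A-\lambda I)u=\varepsilon(|u|+\eta u)$. *)

theory Defs
  imports "HOL-Analysis.Analysis"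
begin

definition mat_ker :: "real^'n^'n \<Rightarrow> (real^'n) set" where
  "mat_ker M = {v. M *v v = 0}"

definition orth_proj :: "(real^'n) set \<Rightarrow> real^'n \<Rightarrow> real^'n" where
  "orth_proj S x = (THE y. y \<in> S \<and> (\<forall>v\<in>S. (x - y) \<bullet> v = 0))"

definition vabs :: "real^'n \<Rightarrow> real^'n" where
  "vabs u = (\<chi> i. \<bar>u $ i\<bar>)"

definition Xi :: "real^'n \<Rightarrow> real^'n^'n" where
  "Xi u = (\<chi> i j. if i = j then sgn (u $ i) else 0)"

end

theory Submission
  imports Defs
begin

lemma subspace_mat_ker: "subspace (mat_ker M)"
  unfolding mat_ker_def subspace_def
  by (auto simp: matrix_vector_right_distrib matrix_vector_mult_scaleR)

lemma orth_proj_unique: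
  assumes S: "subspace S" and y: "y \<in> S" and o: "\<forall>v\<in>S. (x - y) \<bullet> v = 0"
  shows "orth_proj S x = y"
  unfolding orth_proj_def
proof (rule the_equality)
  show "y \<in> S \<and> (\<forall>v\<in>S. (x - y) \<bullet> v = 0)" using y o by auto
next
  fix z assume z: "z \<in> S \<and> (\<forall>v\<in>S. (x - z) \<bullet> v = 0)"
  have d: "z - y \<in> S" using z y S by (simp add: subspace_diff)
  have "(x - y) \<bullet> (z - y) = 0" "(x - z) \<bullet> (z - y) = 0" using o z d by auto
  then have "(z - y) \<bullet> (z - y) = 0" by (simp add: algebra_simps inner_diff_left inner_diff_right)
  then show "z = y" by simp
qed

lemma orth_proj_props:
  assumes S: "subspace S"
  shows "orth_proj S x \<in> S \<and> (\<forall>v\<in>S. (x - orth_proj S x) \<bullet> v = 0)"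
proof -
  obtain y z where y: "y \<in> span S" and z: "\<And>w. w \<in> span S \<Longrightarrow> orthogonal z w" and xyz: "x = y + z"
    by (rule orthogonal_subspace_decomp_exists[of S x]) fast
  have spS: "span S = S" using S by (rule span_eq_iff[THEN iffD2])
  have yS: "y \<in> S" using y spS by simp
  have o: "\<forall>v\<in>S. (x - y) \<bullet> v = 0"
  proof
    fix v assume "v \<in> S"
    then have "orthogonal z v" using z spS by simp
    then show "(x - y) \<bullet> v = 0" using xyz by (simp add: orthogonal_def)
  qed
  show ?thesis using orth_proj_unique[OF S yS o] yS o by simp
qed

lemma orth_proj_linear:
  assumes S: "subspace S"
  shows "linear (orth_proj S)"
proof (rule linearI)
  fix a b
  let ?P = "orth_proj S"
  have pa: "?P a \<in> S" "\<forall>v\<in>S. (a - ?P a) \<bullet> v = 0" using orth_proj_props[OF S, of a] by auto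
  have pb: "?P b \<in> S" "\<forall>v\<in>S. (b - ?P b) \<bullet> v = 0" using orth_proj_props[OF S, of b] by auto
  have "?P a + ?P b \<in> S" using pa pb S by (simp add: subspace_add)
  moreover have "\<forall>v\<in>S. (a + b - (?P a + ?P b)) \<bullet> v = 0"
  proof
    fix v assume "v \<in> S"
    then have h1: "(a - ?P a) \<bullet> v = 0" and h2: "(b - ?P b) \<bullet> v = 0" using pa pb by auto
    have eq: "a + b - (?P a + ?P b) = (a - ?P a) + (b - ?P b)" by simp
    show "(a + b - (?P a + ?P b)) \<bullet> v = 0" by (simp only: eq inner_add_left h1 h2 add_0)
  qed
  ultimately show "?P (a + b) = ?P a + ?P b" by (rule orth_proj_unique[OF S])
next
  fix c a
  let ?P = "orth_proj S"
  have pa: "?P a \<in> S" "\<forall>v\<in>S. (a - ?P a) \<bullet> v = 0" using orth_proj_props[OF S, of a] by auto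
  have "c *\<^sub>R ?P a \<in> S" using pa S by (simp add: subspace_scale)
  moreover have "\<forall>v\<in>S. (c *\<^sub>R a - c *\<^sub>R ?P a) \<bullet> v = 0"
  proof
    fix v assume "v \<in> S"
    then have "(a - ?P a) \<bullet> v = 0" using pa by auto
    moreover have "c *\<^sub>R a - c *\<^sub>R ?P a = c *\<^sub>R (a - ?P a)" by (simp add: scaleR_right_diff_distrib)
    ultimately show "(c *\<^sub>R a - c *\<^sub>R ?P a) \<bullet> v = 0" by simp
  qed
  ultimately show "?P (c *\<^sub>R a) = c *\<^sub>R ?P a" by (rule orth_proj_unique[OF S])
qed

lemma orth_proj_idem:
  assumes S: "subspace S" shows "orth_proj S (orth_proj S x) = orth_proj S x"
  by (rule orth_proj_unique[OF S]) (use orth_proj_props[OF S, of x] in auto)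

lemma orth_proj_zero:
  assumes S: "subspace S" and "\<forall>v\<in>S. x \<bullet> v = 0" shows "orth_proj S x = 0"
  by (rule orth_proj_unique[OF S]) (use assms in \<open>auto simp: subspace_0\<close>)

lemma transpose_diff': "transpose (A - B) = transpose A - transpose (B::real^'n^'n)"
  by (simp add: transpose_def vec_eq_iff)

lemma range_perp:
  fixes A :: "real^'n^'n"
  assumes "v \<in> mat_ker (transpose A - lam *\<^sub>R mat 1)"
  shows "((A - lam *\<^sub>R mat 1) *v w) \<bullet> v = 0"
proof -
  have "(transpose (A - lam *\<^sub>R mat 1)) *v v = 0"
    using assms by (simp add: mat_ker_def transpose_diff' transpose_scalar)
  then have "v v* (A - lam *\<^sub>R mat 1) = 0" by simp
  then have "(v v* (A - lam *\<^sub>R mat 1)) \<bullet> w = 0" by simp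
  then have "v \<bullet> ((A - lam *\<^sub>R mat 1) *v w) = 0" by (simp only: dot_lmul_matrix)
  then show ?thesis by (simp add: inner_commute)
qed

lemma Xi_vabs:
  assumes "\<forall>i. 0 < u $ i * u0 $ i"
  shows "Xi u0 *v u = vabs u"
proof -
  have "(Xi u0 *v u) $ i = \<bar>u $ i\<bar>" for i
  proof -
    have "(Xi u0 *v u) $ i = (\<Sum>j\<in>UNIV. (if i = j then sgn (u0 $ i) else 0) * u $ j)"
      by (simp add: Xi_def matrix_vector_mult_def)
    also have "\<dots> = (\<Sum>j\<in>UNIV. if i = j then sgn (u0 $ i) * u $ j else 0)"
      by (rule sum.cong) auto
    also have "\<dots> = sgn (u0 $ i) * u $ i"
      by simp
    also have "\<dots> = \<bar>u $ i\<bar>"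
      using assms[rule_format, of i]
      by (cases "u0 $ i > 0") (auto simp: sgn_if zero_less_mult_iff)
    finally show ?thesis .
  qed
  then show ?thesis by (simp add: vabs_def vec_eq_iff)
qed

lemma vabs_scale: "c \<ge> 0 \<Longrightarrow> vabs (c *\<^sub>R u) = c *\<^sub>R vabs u"
  by (simp add: vabs_def vec_eq_iff abs_mult)

theorem theorem3:
  fixes A :: "real^'n^'n" and lam :: real and u0 :: "real^'n" and \<eta>0 :: real
  assumes eig: "\<exists>v. v \<noteq> 0 \<and> A *v v = lam *\<^sub>R v"
    and u0_ker: "u0 \<in> mat_ker (A - lam *\<^sub>R mat 1)"
    and u0_norm: "norm u0 = 1"
    and u0_nz: "\<forall>i. u0 $ i \<noteq> 0"
    and eta0: "\<forall>v \<in> mat_ker (transpose A - lam *\<^sub>R mat 1). (vabs u0 + \<eta>0 *\<^sub>R u0) \<bullet> v = 0"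
    and nondeg: "\<And>c w. w \<in> mat_ker (A - lam *\<^sub>R mat 1) \<Longrightarrow> u0 \<bullet> w = 0 \<Longrightarrow>
        orth_proj (mat_ker (transpose A - lam *\<^sub>R mat 1)) (Xi u0 *v w + \<eta>0 *\<^sub>R w)
        + c *\<^sub>R orth_proj (mat_ker (transpose A - lam *\<^sub>R mat 1)) u0 = 0
        \<Longrightarrow> w = 0 \<and> c = 0"
  shows "\<exists>E \<eta> u. open E \<and> (0::real) \<in> E \<and>
           continuous_on E \<eta> \<and> continuous_on E (u :: real \<Rightarrow> real^'n) \<and>
           u 0 = u0 \<and> \<eta> 0 = \<eta>0 \<and>
           (\<forall>\<epsilon>\<in>E. (A - lam *\<^sub>R mat 1) *v u \<epsilon> = \<epsilon> *\<^sub>R (vabs (u \<epsilon>) + \<eta> \<epsilon> *\<^sub>R u \<epsilon>)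
                    \<and> norm (u \<epsilon>) = 1)"
  proof -
  define B where "B = A - lam *\<^sub>R mat 1"
  define Kt where "Kt = mat_ker (transpose A - lam *\<^sub>R mat 1)"
  define Q where "Q = orth_proj Kt"
  define D where "D = Xi u0"
  have S: "subspace Kt" by (simp add: Kt_def subspace_mat_ker)
  have linQ: "linear Q" unfolding Q_def by (rule orth_proj_linear[OF S])
  then have blQ: "bounded_linear Q" by (simp add: linear_conv_bounded_linear)
  have QQ: "\<And>x. Q (Q x) = Q x" unfolding Q_def by (rule orth_proj_idem[OF S])
  have QB: "\<And>w. Q (B *v w) = 0" unfolding Q_def B_def
    by (rule orth_proj_zero[OF S]) (auto simp: Kt_def range_perp)
  have blB: "bounded_linear (\<lambda>x. B *v x)" by (simp add: linear_conv_bounded_linear[symmetric])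
  have blD: "bounded_linear (\<lambda>x. D *v x)" by (simp add: linear_conv_bounded_linear[symmetric])
  define Y :: "real \<times> (real^'n) \<times> real \<Rightarrow> real^'n"
    where "Y = (\<lambda>x. D *v fst (snd x) + snd (snd x) *\<^sub>R fst (snd x))"
  define Y' :: "real \<times> (real^'n) \<times> real \<Rightarrow> real \<times> (real^'n) \<times> real \<Rightarrow> real^'n"
    where "Y' = (\<lambda>x h. D *v fst (snd h) + snd (snd x) *\<^sub>R fst (snd h) + snd (snd h) *\<^sub>R fst (snd x))"
  define F :: "real \<times> (real^'n) \<times> real \<Rightarrow> real \<times> (real^'n) \<times> real"
    where "F = (\<lambda>x. (fst x, B *v fst (snd x) - fst x *\<^sub>R Y x + Q (Y x), u0 \<bullet> fst (snd x) - 1))"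
  define F' :: "real \<times> (real^'n) \<times> real \<Rightarrow> real \<times> (real^'n) \<times> real \<Rightarrow> real \<times> (real^'n) \<times> real"
    where "F' = (\<lambda>x h. (fst h, B *v fst (snd h) - (fst h *\<^sub>R Y x + fst x *\<^sub>R Y' x h) + Q (Y' x h),
                u0 \<bullet> fst (snd h)))"
  note drules = has_derivative_add has_derivative_diff has_derivative_scaleR has_derivative_Pair
    has_derivative_const has_derivative_fst has_derivative_snd has_derivative_ident
    bounded_linear.has_derivative[OF blD] bounded_linear.has_derivative[OF blB]
    bounded_linear.has_derivative[OF blQ] bounded_linear.has_derivative[OF bounded_linear_inner_right[of u0]]
  have dY: "(Y has_derivative Y' x) (at x)" for x
    unfolding Y_def Y'_def
    by (rule has_derivative_eq_rhs, (rule drules)+, simp add: fun_eq_iff algebra_simps)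
  have dF: "(F has_derivative F' x) (at x)" for x
    unfolding F_def F'_def
    by (rule has_derivative_eq_rhs, (rule drules dY)+, simp add: fun_eq_iff algebra_simps)
  have blF: "bounded_linear (F' x)" for x using dF[of x] by (rule has_derivative_bounded_linear)
  define x0 where "x0 = (0::real, u0, \<eta>0)"
  have Bu0: "B *v u0 = 0" using u0_ker by (simp add: B_def mat_ker_def)
  have Du0: "D *v u0 = vabs u0" unfolding D_def
    by (rule Xi_vabs) (use u0_nz not_real_square_gt_zero in blast)
  have Qeta: "Q (vabs u0 + \<eta>0 *\<^sub>R u0) = 0" unfolding Q_def
    by (rule orth_proj_zero[OF S]) (use eta0 in \<open>simp add: Kt_def\<close>)
  have u0u0: "u0 \<bullet> u0 = 1" using u0_norm power2_norm_eq_inner[of u0] by simp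
  have Fx0: "F x0 = 0"
    by (simp add: F_def Y_def x0_def Bu0 Du0 Qeta u0u0 zero_prod_def)
  have linF': "linear (F' x0)" using blF[of x0] by (simp add: bounded_linear.linear)
  have injF: "inj (F' x0)" unfolding linear_injective_0[OF linF']
  proof (intro allI impI)
    fix h assume h0: "F' x0 h = 0"
    obtain a w c where h: "h = (a, w, c)" by (cases h) auto
    have a0: "a = 0" using h0 by (simp add: F'_def h zero_prod_def)
    have uw: "u0 \<bullet> w = 0" using h0 by (simp add: F'_def h zero_prod_def)
    have Y'0: "Y' x0 h = (D *v w + \<eta>0 *\<^sub>R w) + c *\<^sub>R u0" by (simp add: Y'_def x0_def h)
    have e1: "B *v w + Q (Y' x0 h) = 0" using h0 by (simp add: F'_def h zero_prod_def a0 x0_def)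
    then have "Q (B *v w + Q (Y' x0 h)) = 0" by (simp add: linear_0[OF linQ])
    then have QY: "Q (Y' x0 h) = 0" by (simp add: linear_add[OF linQ] QB QQ)
    then have Bw: "B *v w = 0" using e1 by simp
    have "Q (D *v w + \<eta>0 *\<^sub>R w) + c *\<^sub>R Q u0 = 0"
      using QY unfolding Y'0 by (simp add: linear_add[OF linQ] linear_scale[OF linQ])
    then have "w = 0 \<and> c = 0"
      using nondeg[of w c] Bw uw by (simp add: B_def mat_ker_def Q_def Kt_def D_def)
    then show "h = 0" by (simp add: h a0 zero_prod_def)
  qed
  obtain g' where g'lin: "linear g'" and g'inv: "g' \<circ> F' x0 = id"
    using linear_injective_left_inverse[OF _ injF] blF[of x0] by (auto simp: bounded_linear.linear)
  have contF': "continuous_on UNIV (\<lambda>x. Blinfun (F' x))"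
  proof (rule continuous_on_blinfun_componentwise)
    fix i :: "real \<times> (real^'n) \<times> real"
    have "continuous_on UNIV (\<lambda>x. F' x i)"
      unfolding F'_def Y_def Y'_def
      by (intro continuous_intros continuous_on_compose2[OF bounded_linear.continuous_on[OF blQ continuous_on_id]]
            continuous_on_compose2[OF bounded_linear.continuous_on[OF blD continuous_on_id]]) auto
    then show "continuous_on UNIV (\<lambda>x. blinfun_apply (Blinfun (F' x)) i)"
      by (simp add: bounded_linear_Blinfun_apply[OF blF])
  qed
  have blg': "bounded_linear g'" using g'lin by (simp add: linear_conv_bounded_linear)
  have inv: "Blinfun g' o\<^sub>L Blinfun (F' x0) = id_blinfun"
  proof (rule blinfun_eqI)
    fix i
    have "g' (F' x0 i) = i" using g'inv by (metis comp_apply id_apply)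
    then show "blinfun_apply (Blinfun g' o\<^sub>L Blinfun (F' x0)) i = blinfun_apply id_blinfun i"
      by (simp add: bounded_linear_Blinfun_apply[OF blF] bounded_linear_Blinfun_apply[OF blg'])
  qed
  obtain U' V g where "open U'" "x0 \<in> U'" "open V" "F x0 \<in> V" and hom: "homeomorphism U' V F g"
  proof -
    have dF2: "\<And>x. x \<in> UNIV \<Longrightarrow> (F has_derivative blinfun_apply (Blinfun (F' x))) (at x)"
      by (simp add: bounded_linear_Blinfun_apply[OF blF] dF)
    show thesis
      apply (rule inverse_function_theorem[OF open_UNIV dF2 contF' UNIV_I inv])
       apply simp
      subgoal for U' V g g' by (rule that[of U' V g])
      done
  qed
  have gF: "\<And>x. x \<in> U' \<Longrightarrow> g (F x) = x" and Fg: "\<And>y. y \<in> V \<Longrightarrow> F (g y) = y"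
    and contg: "continuous_on V g"
    using hom by (auto simp: homeomorphism_def)
  define emb :: "real \<Rightarrow> real \<times> (real^'n) \<times> real" where "emb = (\<lambda>e. (e, 0, 0))"
  have contemb: "continuous_on UNIV emb" unfolding emb_def by (intro continuous_intros)
  define E0 where "E0 = emb -` V"
  have openE0: "open E0"
    using continuous_on_open_vimage[OF open_UNIV, of emb] contemb \<open>open V\<close> by (simp add: E0_def)
  define h where "h = (\<lambda>e. g (emb e))"
  have conth: "continuous_on E0 h" unfolding h_def
    by (rule continuous_on_compose2[OF contg continuous_on_subset[OF contemb]]) (auto simp: E0_def)
  define v where "v = (\<lambda>e. fst (snd (h e)))"
  define et where "et = (\<lambda>e. snd (snd (h e)))"
  have contv: "continuous_on E0 v" unfolding v_def by (intro continuous_intros conth)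
  have contet: "continuous_on E0 et" unfolding et_def by (intro continuous_intros conth)
  have Fh: "F (h e) = emb e" if "e \<in> E0" for e
    using Fg that by (simp add: h_def E0_def)
  have emb0: "emb 0 = F x0" by (simp add: Fx0 emb_def zero_prod_def)
  have E00: "0 \<in> E0" using emb0 \<open>F x0 \<in> V\<close> by (simp add: E0_def)
  have h0: "h 0 = x0" using gF[OF \<open>x0 \<in> U'\<close>] emb0 by (simp add: h_def)
  have v0: "v 0 = u0" and et0: "et 0 = \<eta>0" using h0 by (simp_all add: v_def et_def x0_def)
  define W where "W = (\<Inter>i\<in>UNIV. {y::real^'n. 0 < y $ i * u0 $ i})"
  have openW: "open W" unfolding W_def
    by (intro open_INT ballI open_Collect_less continuous_intros) auto
  define I where "I = E0 \<inter> {-1/2<..<(1/2::real)}"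
  have openI: "open I" using openE0 by (simp add: I_def open_Int)
  have contvI: "continuous_on I v" using contv by (rule continuous_on_subset) (simp add: I_def)
  define E where "E = v -` W \<inter> I"
  have openE: "open E"
    using continuous_on_open_vimage[OF openI, of v] contvI openW unfolding E_def by blast
  have sq: "\<And>i. 0 < u0 $ i * u0 $ i" using u0_nz by (metis not_real_square_gt_zero)
  have W0: "u0 \<in> W" using sq by (simp add: W_def)
  have E0E: "0 \<in> E" using E00 v0 W0 by (simp add: E_def I_def)
  have EI: "E \<subseteq> I" and IE0: "I \<subseteq> E0" by (auto simp: E_def I_def)
  have vW: "\<And>e. e \<in> E \<Longrightarrow> \<forall>i. 0 < v e $ i * u0 $ i" by (auto simp: E_def W_def)
  have vnz: "v e \<noteq> 0" if "e \<in> E" for e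
  proof
    assume "v e = 0" then show False using vW[OF that] by (metis less_irrefl mult_zero_left zero_index)
  qed
  define u where "u = (\<lambda>e. (1 / norm (v e)) *\<^sub>R v e)"
  have contu: "continuous_on E u" unfolding u_def
    using continuous_on_subset[OF contv] EI IE0 vnz
    by (intro continuous_intros) auto
  have u0': "u 0 = u0" using v0 u0_norm by (simp add: u_def)
  have eqn: "(A - lam *\<^sub>R mat 1) *v u e = e *\<^sub>R (vabs (u e) + et e *\<^sub>R u e) \<and> norm (u e) = 1"
    if eE: "e \<in> E" for e
  proof -
    have eE0: "e \<in> E0" and ehalf: "e < 1/2" using eE by (auto simp: E_def I_def)
    define y where "y = D *v v e + et e *\<^sub>R v e"
    have Yh: "Y (h e) = y" by (simp add: Y_def y_def v_def et_def)
    have fh: "fst (h e) = e" using Fh[OF eE0] by (simp add: F_def emb_def)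
    have G: "B *v v e - e *\<^sub>R y + Q y = 0"
      using Fh[OF eE0] by (simp add: F_def emb_def fh Yh v_def)
    have "Q (B *v v e - e *\<^sub>R y + Q y) = 0" using G by (simp add: linear_0[OF linQ])
    then have "Q y - e *\<^sub>R Q y = 0"
      by (simp add: linear_add[OF linQ] linear_diff[OF linQ] linear_scale[OF linQ] QB QQ)
    then have "(1 - e) *\<^sub>R Q y = 0" by (simp add: scaleR_diff_left)
    then have Qy: "Q y = 0" using ehalf by simp
    have Bv: "B *v v e = e *\<^sub>R y" using G Qy by (simp add: algebra_simps)
    have Dv: "D *v v e = vabs (v e)" unfolding D_def by (rule Xi_vabs[OF vW[OF eE]])
    define c where "c = 1 / norm (v e)"
    have c0: "c \<ge> 0" by (simp add: c_def)
    have ue: "u e = c *\<^sub>R v e" by (simp add: u_def c_def)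
    have "B *v u e = c *\<^sub>R (e *\<^sub>R (vabs (v e) + et e *\<^sub>R v e))"
      by (simp add: ue matrix_vector_mult_scaleR Bv y_def Dv)
    also have "\<dots> = e *\<^sub>R (vabs (u e) + et e *\<^sub>R u e)"
      by (simp add: ue vabs_scale[OF c0] algebra_simps)
    finally have "B *v u e = e *\<^sub>R (vabs (u e) + et e *\<^sub>R u e)" .
    moreover have "norm (u e) = 1" using vnz[OF eE] by (simp add: u_def)
    ultimately show ?thesis by (simp add: B_def)
  qed
  show ?thesis
    apply (rule exI[of _ E], rule exI[of _ et], rule exI[of _ u])
    using openE E0E continuous_on_subset[OF contet] EI IE0 contu u0' et0 eqn by auto
qed

end
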